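(* Let $E$ and $B$ be finite dimensional JB$^*$-triples and let $f:S(E)\to S(B)$ be a surjective isometry. Let $e_1,e_2$ be two orthogonal finite rank tripotents in $E$, and for $j=1,2$ let $T_{e_j}:E_0(e_j)\to B_0(f(e_j))$ be the surjective real linear isometry satisfying $f(e_j+x)=f(e_j)+T_{e_j}(x)$ for every $x$ in the closed unit ball of $E_0(e_j)$. Then $T_{e_1}(x)=T_{e_2}(x)$ for all $x\in E_0(e_1)\cap E_0(e_2)$.
   Context: A JB$^*$-triple is a complex Banach space $E$ with a continuous triple product $\{\cdot,\cdot,\cdot\}$, bilinear and symmetric in the outer variables and conjugate linear in the middle one, such that, with $L(a,b)z=\{a,b,z\}$: $L(a,b)L(x,y)-L(x,y)L(a,b)=L(L(a,b)x,y)-L(x,L(b,a)y)$; $L(a,a)$ is hermitian with non-negative spectrum; $\|\{a,a,a\}\|=\|a\|^3$. A tripotent $e$ satisfies $\{e,e,e\}=e$; $E_i(e)$ ($i=0,1,2$) is the $\frac i2$-eigenspace of $L(e,e)$; $e$ is minimal if $E_2(e)=\mathbb{C}e\neq\{0\}$; $a\perp b$ means $L(a,b)=0$; a finite rank tripotent is a finite sum of mutually orthogonal minimal tripotents. For such $f$ and finite rank $e$, $f(e)$ is a finite rank tripotent of $B$ and a surjective real linear isometry $T_e$ as described exists. $S(X)$ is the unit sphere; a surjective isometry is a distance preserving surjection. *)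

theory Defs
  imports "HOL-Analysis.Analysis"
begin

definition complex_normed_structure :: "(complex \<Rightarrow> 'a::real_normed_vector \<Rightarrow> 'a) \<Rightarrow> bool" where
  "complex_normed_structure sm \<longleftrightarrow>
     (\<forall>r x. sm (complex_of_real r) x = r *\<^sub>R x) \<and>
     (\<forall>a b x. sm (a * b) x = sm a (sm b x)) \<and>
     (\<forall>a x y. sm a (x + y) = sm a x + sm a y) \<and>
     (\<forall>a b x. sm (a + b) x = sm a x + sm b x) \<and>
     (\<forall>a x. norm (sm a x) = cmod a * norm x)"

text \<open>Finite dimensionality (over the reals, equivalently over the complexes).\<close>
definition fin_dim_space :: "'a::real_vector itself \<Rightarrow> bool" where
  "fin_dim_space _ \<longleftrightarrow> (\<exists>S::'a set. finite S \<and> span S = UNIV)"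

text \<open>Hermitian operator: \<open>exp(i s T)\<close> is an isometry for every real \<open>s\<close>
  (i.e. \<open>\<parallel>exp(i s T)\<parallel> = 1\<close>), the exponential given by its power series.\<close>
definition hermitian_op :: "(complex \<Rightarrow> 'a::real_normed_vector \<Rightarrow> 'a) \<Rightarrow> ('a \<Rightarrow> 'a) \<Rightarrow> bool" where
  "hermitian_op sm T \<longleftrightarrow>
     (\<forall>s::real. \<forall>x. norm (\<Sum>n. sm ((\<i> * complex_of_real s) ^ n / fact n) ((T ^^ n) x)) = norm x)"

definition op_spectrum :: "(complex \<Rightarrow> 'a \<Rightarrow> 'a::real_vector) \<Rightarrow> ('a \<Rightarrow> 'a) \<Rightarrow> complex set" where
  "op_spectrum sm T = {c. \<not> bij (\<lambda>x. T x - sm c x)}"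

definition JB_star_triple ::
  "(complex \<Rightarrow> 'a::{real_normed_vector,banach} \<Rightarrow> 'a) \<Rightarrow> ('a \<Rightarrow> 'a \<Rightarrow> 'a \<Rightarrow> 'a) \<Rightarrow> bool" where
  "JB_star_triple sm t \<longleftrightarrow>
     complex_normed_structure sm \<and>
     continuous_on UNIV (\<lambda>(a, b, c). t a b c) \<and>
     (\<forall>a b c. t a b c = t c b a) \<and>
     (\<forall>a a' b c. t (a + a') b c = t a b c + t a' b c) \<and>
     (\<forall>k a b c. t (sm k a) b c = sm k (t a b c)) \<and>
     (\<forall>a b b' c. t a (b + b') c = t a b c + t a b' c) \<and>
     (\<forall>k a b c. t a (sm k b) c = sm (cnj k) (t a b c)) \<and>
     (\<forall>a b x y z. t a b (t x y z) - t x y (t a b z) = t (t a b x) y z - t x (t b a y) z) \<and>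
     (\<forall>a. hermitian_op sm (t a a)) \<and>
     (\<forall>a. \<forall>k\<in>op_spectrum sm (t a a). k \<in> \<real> \<and> Re k \<ge> 0) \<and>
     (\<forall>a. norm (t a a a) = norm a ^ 3)"

definition tripotent :: "('a \<Rightarrow> 'a \<Rightarrow> 'a \<Rightarrow> 'a) \<Rightarrow> 'a \<Rightarrow> bool" where
  "tripotent t e \<longleftrightarrow> t e e e = e"

definition peirce0 :: "('a \<Rightarrow> 'a \<Rightarrow> 'a \<Rightarrow> 'a) \<Rightarrow> 'a \<Rightarrow> 'a::zero set" where
  "peirce0 t e = {x. t e e x = 0}"

definition peirce2 :: "('a \<Rightarrow> 'a \<Rightarrow> 'a \<Rightarrow> 'a) \<Rightarrow> 'a \<Rightarrow> 'a set" where
  "peirce2 t e = {x. t e e x = x}"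

definition triple_orth :: "('a::zero \<Rightarrow> 'a \<Rightarrow> 'a \<Rightarrow> 'a) \<Rightarrow> 'a \<Rightarrow> 'a \<Rightarrow> bool" where
  "triple_orth t a b \<longleftrightarrow> (\<forall>z. t a b z = 0)"

definition minimal_tripotent ::
  "(complex \<Rightarrow> 'a \<Rightarrow> 'a::zero) \<Rightarrow> ('a \<Rightarrow> 'a \<Rightarrow> 'a \<Rightarrow> 'a) \<Rightarrow> 'a \<Rightarrow> bool" where
  "minimal_tripotent sm t e \<longleftrightarrow>
     tripotent t e \<and> peirce2 t e = range (\<lambda>c. sm c e) \<and> e \<noteq> 0"

definition finite_rank_tripotent ::
  "(complex \<Rightarrow> 'a \<Rightarrow> 'a::comm_monoid_add) \<Rightarrow> ('a \<Rightarrow> 'a \<Rightarrow> 'a \<Rightarrow> 'a) \<Rightarrow> 'a \<Rightarrow> bool" where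
  "finite_rank_tripotent sm t e \<longleftrightarrow>
     (\<exists>F. finite F \<and> F \<noteq> {} \<and> (\<forall>u\<in>F. minimal_tripotent sm t u) \<and>
          (\<forall>u\<in>F. \<forall>v\<in>F. u \<noteq> v \<longrightarrow> triple_orth t u v) \<and> e = \<Sum>F)"

end

theory Submission
  imports Defs
begin

locale jt =
  fixes t :: "'a::real_normed_vector \<Rightarrow> 'a \<Rightarrow> 'a \<Rightarrow> 'a"
  assumes sym: "t a b c = t c b a"
    and add1: "t (a + a') b c = t a b c + t a' b c"
    and add2: "t a (b + b') c = t a b c + t a b' c"
    and scal1: "t (r *\<^sub>R a) b c = r *\<^sub>R t a b c"
    and jor: "t a b (t x y z) - t x y (t a b z) = t (t a b x) y z - t x (t b a y) z"
    and ncube: "norm (t a a a) = norm a ^ 3"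
begin

lemma add3: "t a b (c + c') = t a b c + t a b c'"
  by (metis sym add1)

lemma zero1[simp]: "t 0 b c = 0"
  using add1[of 0 0 b c] by simp
lemma zero2[simp]: "t a 0 c = 0"
  using add2[of a 0 0 c] by simp
lemma zero3[simp]: "t a b 0 = 0"
  using sym zero1 by metis

lemma scal3: "t a b (r *\<^sub>R c) = r *\<^sub>R t a b c"
  by (metis sym scal1)

lemma J: "t a b (t x y z) = t (t a b x) y z - t x (t b a y) z + t x y (t a b z)"
  using jor[of a b x y z] by (simp add: algebra_simps)

lemma orth_sym:
  assumes "\<forall>z. t a b z = 0"
  shows "t b a z = 0"
proof -
  have h: "t x (t b a y) w = 0" for x y w
    using J[of a b x y w] assms by simp
  define P where "P = t b a z"
  have "t P P P = 0" using h[of P z P] unfolding P_def by simp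
  hence "norm P ^ 3 = 0" using ncube[of P] by simp
  thus ?thesis unfolding P_def by simp
qed

lemma trip_norm:
  assumes "t e e e = e" shows "norm e \<le> 1"
proof (rule ccontr)
  assume "\<not> norm e \<le> 1"
  hence g: "norm e > 1" by simp
  have "norm e ^ 3 = norm e" using ncube[of e] assms by simp
  moreover have "norm e * 1 < norm e * (norm e * norm e)"
    using g by (intro mult_strict_left_mono) (auto simp: less_1_mult)
  ultimately show False by (simp only: power3_eq_cube mult_1_right)
qed

context
  fixes e b
  assumes tr: "t e e e = e" and b0: "t e e b = 0"
begin

lemma bee: "t b e e = 0" using b0 sym by metis

lemma ebe: "t e b e = 0"
proof -
  define P where "P = t e b e"
  have 1: "P = t P e e + t e e P"
    using J[of e b e e e] tr bee unfolding P_def by simp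
  have 2: "t e e P = 2 *\<^sub>R P"
    using J[of e e e b e] tr b0 unfolding P_def by (simp add: scaleR_2)
  have 3: "t P e e = t e e P" using sym by metis
  have eq: "P = 2 *\<^sub>R P + 2 *\<^sub>R P" by (metis 1 2 3)
  have "(3::real) *\<^sub>R P = (2 + 2 - 1) *\<^sub>R P" by simp
  also have "\<dots> = 2 *\<^sub>R P + 2 *\<^sub>R P - P"
    by (simp only: scaleR_left_diff_distrib scaleR_left_distrib scaleR_one)
  also have "\<dots> = 0" using eq by (metis diff_self)
  finally have "3 *\<^sub>R P = 0" .
  thus ?thesis unfolding P_def by simp
qed

lemma ebb: "t e b b = 0"
proof -
  have 1: "t e e (t e b b) = 0"
    using J[of e b e e b] b0 ebe bee by simp
  have 2: "t e e (t e b b) = t e b b"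
    using J[of e e e b b] tr b0 by simp
  show ?thesis using 1 2 by simp
qed

lemma beb: "t b e b = 0"
proof -
  have 1: "t e e (t b e b) = 0"
    using J[of b e e e b] b0 ebe bee by simp
  have 2: "t e e (t b e b) = - t b e b"
    using J[of e e b e b] tr b0 by simp
  show ?thesis using 1 2 by simp
qed

lemma bbe: "t b b e = 0" using ebb sym by metis

lemma cube: "t (e + b) (e + b) (e + b) = e + t b b b"
  by (simp add: add1 add2 add3 tr b0 bee ebe ebb beb bbe)

lemma cube_peirce: "t e e (t b b b) = 0"
  using J[of e e b b b] b0 by simp

end

lemma pow_bound:
  assumes tr: "t e e e = e"
  shows "\<forall>b. t e e b = 0 \<longrightarrow> norm b \<le> 1 \<longrightarrow> norm (e + b) ^ (3 ^ n) \<le> 2"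
proof (induction n)
  case 0
  show ?case
  proof (intro allI impI)
    fix b :: 'a assume "t e e b = 0" "norm b \<le> 1"
    thus "norm (e + b) ^ (3 ^ 0) \<le> 2"
      using trip_norm[OF tr] norm_triangle_ineq[of e b] by simp
  qed
next
  case (Suc n)
  show ?case
  proof (intro allI impI)
    fix b :: 'a assume b: "t e e b = 0" "norm b \<le> 1"
    have "norm (t b b b) \<le> 1" using ncube[of b] b(2)
      by (simp add: power_le_one)
    hence "norm (e + t b b b) ^ (3 ^ n) \<le> 2"
      using Suc cube_peirce[OF tr b(1)] by blast
    moreover have "norm (e + b) ^ (3 ^ Suc n) = norm (e + t b b b) ^ (3 ^ n)"
      using cube[OF tr b(1)] ncube[of "e+b"]
      by (metis power_Suc power_mult mult.commute)
    ultimately show "norm (e + b) ^ (3 ^ Suc n) \<le> 2" by simp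
  qed
qed

lemma sum_bound:
  assumes tr: "t e e e = e" and b: "t e e b = 0" "norm b \<le> 1"
  shows "norm (e + b) \<le> 1"
proof (rule ccontr)
  assume "\<not> ?thesis"
  hence g: "norm (e + b) > 1" by simp
  then obtain n where n: "2 < norm (e + b) ^ n" using real_arch_pow by blast
  have "n < 2 ^ n" by (rule less_exp)
  moreover have "(2::nat) ^ n \<le> 3 ^ n" by (simp add: power_mono)
  ultimately have "n \<le> 3 ^ n" by simp
  hence "norm (e + b) ^ n \<le> norm (e + b) ^ (3 ^ n)"
    using g by (intro power_increasing) auto
  with n pow_bound[OF tr, rule_format, OF b, of n] show False by simp
qed

lemma sum1: "finite F \<Longrightarrow> t (\<Sum>F) y z = (\<Sum>u\<in>F. t u y z)"
  by (induction F rule: finite_induct) (auto simp: add1)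
lemma sum2: "finite F \<Longrightarrow> t x (\<Sum>F) z = (\<Sum>u\<in>F. t x u z)"
  by (induction F rule: finite_induct) (auto simp: add2)
lemma sum3: "finite F \<Longrightarrow> t x y (\<Sum>F) = (\<Sum>u\<in>F. t x y u)"
  by (induction F rule: finite_induct) (auto simp: add3)

lemma sum_single:
  assumes "finite F" "u \<in> F" "\<forall>v\<in>F. v \<noteq> u \<longrightarrow> g v = 0"
  shows "sum g F = g u"
proof -
  have "sum g F = g u + sum g (F - {u})" using assms by (simp add: sum.remove)
  also have "sum g (F - {u}) = 0" using assms by (intro sum.neutral) auto
  finally show ?thesis by simp
qed

lemma frt_trip:
  assumes F: "finite F" and tr: "\<forall>u\<in>F. t u u u = u"
    and o: "\<forall>u\<in>F. \<forall>v\<in>F. u \<noteq> v \<longrightarrow> (\<forall>z. t u v z = 0)"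
  shows "t (\<Sum>F) (\<Sum>F) (\<Sum>F) = \<Sum>F"
proof -
  have "t (\<Sum>F) (\<Sum>F) (\<Sum>F) = (\<Sum>u\<in>F. \<Sum>v\<in>F. \<Sum>w\<in>F. t u v w)"
  proof -
    have "t (\<Sum>F) (\<Sum>F) (\<Sum>F) = (\<Sum>u\<in>F. t u (\<Sum>F) (\<Sum>F))" by (rule sum1[OF F])
    also have "\<dots> = (\<Sum>u\<in>F. \<Sum>v\<in>F. t u v (\<Sum>F))" by (rule sum.cong[OF refl], rule sum2[OF F])
    also have "\<dots> = (\<Sum>u\<in>F. \<Sum>v\<in>F. \<Sum>w\<in>F. t u v w)"
      by (rule sum.cong[OF refl], rule sum.cong[OF refl], rule sum3[OF F])
    finally show ?thesis .
  qed
  also have "\<dots> = (\<Sum>u\<in>F. u)"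
  proof (rule sum.cong[OF refl])
    fix u assume u: "u \<in> F"
    have "(\<Sum>v\<in>F. \<Sum>w\<in>F. t u v w) = (\<Sum>w\<in>F. t u u w)"
      by (rule sum_single[OF F u]) (use o u in auto)
    also have "\<dots> = t u u u"
    proof (rule sum_single[OF F u], intro ballI impI)
      fix w assume "w \<in> F" "w \<noteq> u"
      hence "t w u u = 0" using o u by blast
      thus "t u u w = 0" using sym by metis
    qed
    finally show "(\<Sum>v\<in>F. \<Sum>w\<in>F. t u v w) = u" using tr u by simp
  qed
  finally show ?thesis by simp
qed

end

lemma JB_jt:
  assumes "JB_star_triple sm t"
  shows "jt t"
proof -
  have cs: "complex_normed_structure sm" using assms unfolding JB_star_triple_def by blast
  have r: "sm (complex_of_real r) x = r *\<^sub>R x" for r x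
    using cs unfolding complex_normed_structure_def by blast
  show ?thesis
    unfolding jt_def
  proof (intro conjI allI)
    fix r a b c
    show "t (r *\<^sub>R a) b c = r *\<^sub>R t a b c"
      using assms unfolding JB_star_triple_def by (metis r)
  qed (use assms in \<open>auto simp: JB_star_triple_def\<close>)
qed

lemma frt_trip2:
  assumes "jt t" "finite_rank_tripotent sm t e"
  shows "t e e e = e"
proof -
  obtain F where F: "finite F" "\<forall>u\<in>F. minimal_tripotent sm t u"
    "\<forall>u\<in>F. \<forall>v\<in>F. u \<noteq> v \<longrightarrow> triple_orth t u v" "e = \<Sum>F"
    using assms(2) unfolding finite_rank_tripotent_def by blast
  show ?thesis
    using jt.frt_trip[OF assms(1) F(1)] F
    unfolding minimal_tripotent_def tripotent_def triple_orth_def by auto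
qed

theorem lemma3p18:
  fixes smE :: "complex \<Rightarrow> 'a::{real_normed_vector,banach} \<Rightarrow> 'a"
    and tE :: "'a \<Rightarrow> 'a \<Rightarrow> 'a \<Rightarrow> 'a"
    and smB :: "complex \<Rightarrow> 'b::{real_normed_vector,banach} \<Rightarrow> 'b"
    and tB :: "'b \<Rightarrow> 'b \<Rightarrow> 'b \<Rightarrow> 'b"
    and f :: "'a \<Rightarrow> 'b"
    and e1 e2 :: 'a
    and T1 T2 :: "'a \<Rightarrow> 'b"
  assumes E: "JB_star_triple smE tE" and Efd: "fin_dim_space TYPE('a)"
    and B: "JB_star_triple smB tB" and Bfd: "fin_dim_space TYPE('b)"
    and f_onto: "f ` sphere 0 1 = sphere 0 1"
    and f_isom: "\<forall>x\<in>sphere 0 1. \<forall>y\<in>sphere 0 1. dist (f x) (f y) = dist x y"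
    and e1: "finite_rank_tripotent smE tE e1"
    and e2: "finite_rank_tripotent smE tE e2"
    and orth: "triple_orth tE e1 e2"
    and T1_onto: "T1 ` peirce0 tE e1 = peirce0 tB (f e1)"
    and T1_add: "\<forall>x\<in>peirce0 tE e1. \<forall>y\<in>peirce0 tE e1. T1 (x + y) = T1 x + T1 y"
    and T1_scale: "\<forall>r::real. \<forall>x\<in>peirce0 tE e1. T1 (r *\<^sub>R x) = r *\<^sub>R T1 x"
    and T1_isom: "\<forall>x\<in>peirce0 tE e1. \<forall>y\<in>peirce0 tE e1. dist (T1 x) (T1 y) = dist x y"
    and T1_f: "\<forall>x\<in>peirce0 tE e1. norm x \<le> 1 \<longrightarrow> f (e1 + x) = f e1 + T1 x"
    and T2_onto: "T2 ` peirce0 tE e2 = peirce0 tB (f e2)"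
    and T2_add: "\<forall>x\<in>peirce0 tE e2. \<forall>y\<in>peirce0 tE e2. T2 (x + y) = T2 x + T2 y"
    and T2_scale: "\<forall>r::real. \<forall>x\<in>peirce0 tE e2. T2 (r *\<^sub>R x) = r *\<^sub>R T2 x"
    and T2_isom: "\<forall>x\<in>peirce0 tE e2. \<forall>y\<in>peirce0 tE e2. dist (T2 x) (T2 y) = dist x y"
    and T2_f: "\<forall>x\<in>peirce0 tE e2. norm x \<le> 1 \<longrightarrow> f (e2 + x) = f e2 + T2 x"
  shows "\<forall>x \<in> peirce0 tE e1 \<inter> peirce0 tE e2. T1 x = T2 x"
proof -
  interpret jt tE by (rule JB_jt[OF E])
  have tr1: "tE e1 e1 e1 = e1" by (rule frt_trip2[OF jt_axioms e1])
  have tr2: "tE e2 e2 e2 = e2" by (rule frt_trip2[OF jt_axioms e2])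
  have o: "\<forall>z. tE e1 e2 z = 0" using orth unfolding triple_orth_def by blast
  have h12: "tE e1 e1 e2 = 0" using orth_sym[OF o] sym by metis
  have h21: "tE e2 e2 e1 = 0" using o sym by metis
  have key: "f e1 + T1 e2 + T1 z = f e2 + T2 e1 + T2 z"
    if z1: "tE e1 e1 z = 0" and z2: "tE e2 e2 z = 0" and zn: "norm z \<le> 1" for z
  proof -
    have y1: "e2 + z \<in> peirce0 tE e1" using h12 z1 by (simp add: peirce0_def add3)
    have y2: "e1 + z \<in> peirce0 tE e2" using h21 z2 by (simp add: peirce0_def add3)
    have n1: "norm (e2 + z) \<le> 1" by (rule sum_bound[OF tr2 z2 zn])
    have n2: "norm (e1 + z) \<le> 1" by (rule sum_bound[OF tr1 z1 zn])
    have "f (e1 + (e2 + z)) = f e1 + T1 e2 + T1 z"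
      using T1_f y1 n1 T1_add h12 z1 by (simp add: peirce0_def add.assoc)
    moreover have "f (e2 + (e1 + z)) = f e2 + T2 e1 + T2 z"
      using T2_f y2 n2 T2_add h21 z2 by (simp add: peirce0_def add.assoc)
    moreover have "e1 + (e2 + z) = e2 + (e1 + z)" by (simp add: algebra_simps)
    ultimately show ?thesis by simp
  qed
  have T10: "T1 0 = 0" using T1_scale[rule_format, of 0 0] by (simp add: peirce0_def)
  have T20: "T2 0 = 0" using T2_scale[rule_format, of 0 0] by (simp add: peirce0_def)
  have base: "f e1 + T1 e2 = f e2 + T2 e1" using key[of 0] T10 T20 by simp
  show ?thesis
  proof
    fix x assume x: "x \<in> peirce0 tE e1 \<inter> peirce0 tE e2"
    define s where "s = 1 / (norm x + 1)"
    have "norm x + 1 > 0" using norm_ge_zero[of x] by linarith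
    hence sp: "s > 0" unfolding s_def by simp
    have "norm (s *\<^sub>R x) = norm x / (norm x + 1)" unfolding s_def using sp
      by (simp add: s_def)
    hence zn: "norm (s *\<^sub>R x) \<le> 1" using \<open>norm x + 1 > 0\<close> by (simp add: divide_le_eq)
    have "f e1 + T1 e2 + T1 (s *\<^sub>R x) = f e2 + T2 e1 + T2 (s *\<^sub>R x)"
      using x zn by (intro key) (auto simp: peirce0_def scal3)
    hence "s *\<^sub>R T1 x = s *\<^sub>R T2 x" using base x T1_scale T2_scale by auto
    thus "T1 x = T2 x" using sp by simp
  qed
qed

end
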